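(* Let $d\ge1$ be an integer, $\gamma^2>0$, $\sigma^2\ge0$, and let there be $I$ client types with data sizes $D_1,\dots,D_I>0$. Let $\boldsymbol{K}=(K_1,\dots,K_I)$ be nonnegative integers with $K=\sum_i K_i\ge1$, describing a non-empty coalition with $K_i$ participants of type $i$, and set $$\eta=\frac{(2K+1)\sum_{i=1}^I K_i/D_i}{K^2}-\frac{(K+1)\sigma^2}{d\gamma^2K}.$$ Fix a type $j\in\{1,\dots,I\}$, let $\boldsymbol{e}_j$ be the $j$-th unit vector, and for $m\ge 0$ let $\Delta_m=\varepsilon(\boldsymbol{K}+m\boldsymbol{e}_j)-\varepsilon(\boldsymbol{K}+(m+1)\boldsymbol{e}_j)$ be the network effect of adding one more type-$j$ participant after $m$ type-$j$ participants have already been added. Then: (1) if $1/D_j<\sigma^2/(d\gamma^2)$ and $1/D_j\le\eta$, then $\Delta_0\ge0$ and there exists $M$ such that $\Delta_m<0$ for all $m\ge M$; (2) if $\sigma^2/(d\gamma^2)\le 1/D_j\le\eta$, then $\Delta_m\ge 0$ for all $m\ge0$; (3) if $\eta<1/D_j\le\sigma^2/(d\gamma^2)$, then $\Delta_m<0$ for all $m\ge 0$; (4) if $\max\{\sigma^2/(d\gamma^2),\eta\}<1/D_j$, then $\Delta_0<0$ and there exists $M$ such that $\Delta_m>0$ for all $m\ge M$.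
   Context: For a coalition described by nonnegative integers $\boldsymbol{K}=(K_1,\dots,K_I)$ (number of participants of each type) with $K=\sum_iK_i\ge1$, the generalization error of the federated model is defined as $\varepsilon(\boldsymbol{K})=\frac{d\gamma^2}{K^2}\sum_{i=1}^I\frac{K_i}{D_i}+\frac{K-1}{K}\sigma^2$, where $d$ is the feature dimension, $\gamma^2$ the data (target-noise) variance and $\sigma^2$ the client variance. The network effect of a new participant is the decrease in generalization error caused by adding it; "non-negative/positive" network effects correspond to $\Delta_m\ge0$/$\Delta_m>0$. The paper states the conclusions informally as "initially non-negative but eventually negative as more type-$j$ clients participate", "always non-negative", "always negative", and "initially negative but eventually positive"; the claim records these in terms of $\Delta_m$. *)

theory Defs
  imports Complex_Main
begin

text \<open>Client types are indexed by 1..I. A coalition is K :: nat => nat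
(only the values on 1..I matter). gsq = gamma^2, ssq = sigma^2.\<close>

definition total :: "nat \<Rightarrow> (nat \<Rightarrow> nat) \<Rightarrow> real" where
  "total I K = real (\<Sum>i=1..I. K i)"

definition gen_err :: "real \<Rightarrow> real \<Rightarrow> real \<Rightarrow> nat \<Rightarrow> (nat \<Rightarrow> real) \<Rightarrow> (nat \<Rightarrow> nat) \<Rightarrow> real" where
  "gen_err d gsq ssq I D K =
     d * gsq / (total I K)^2 * (\<Sum>i=1..I. real (K i) / D i)
     + (total I K - 1) / total I K * ssq"

definition eta :: "real \<Rightarrow> real \<Rightarrow> real \<Rightarrow> nat \<Rightarrow> (nat \<Rightarrow> real) \<Rightarrow> (nat \<Rightarrow> nat) \<Rightarrow> real" where
  "eta d gsq ssq I D K =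
     (2 * total I K + 1) * (\<Sum>i=1..I. real (K i) / D i) / (total I K)^2
     - (total I K + 1) * ssq / (d * gsq * total I K)"

definition net_effect :: "real \<Rightarrow> real \<Rightarrow> real \<Rightarrow> nat \<Rightarrow> (nat \<Rightarrow> real) \<Rightarrow> (nat \<Rightarrow> nat) \<Rightarrow> nat \<Rightarrow> nat \<Rightarrow> real" where
  "net_effect d gsq ssq I D K j m =
     gen_err d gsq ssq I D (K(j := K j + m)) - gen_err d gsq ssq I D (K(j := K j + m + 1))"

end

theory Submission
  imports Defs
begin

lemma sum_upd:
  fixes g :: "nat \<Rightarrow> nat \<Rightarrow> real"
  assumes "j \<in> {1..I}"
  shows "(\<Sum>i=1..I. g i ((K(j := v)) i)) = (\<Sum>i=1..I. g i (K i)) - g j (K j) + g j v"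
proof -
  have "(\<Sum>i=1..I. g i ((K(j := v)) i)) = g j v + (\<Sum>i\<in>{1..I}-{j}. g i (K i))"
    using assms by (simp add: sum.remove)
  moreover have "(\<Sum>i=1..I. g i (K i)) = g j (K j) + (\<Sum>i\<in>{1..I}-{j}. g i (K i))"
    using assms by (simp add: sum.remove)
  ultimately show ?thesis by simp
qed

lemma total_upd:
  fixes j I m :: nat and K :: "nat \<Rightarrow> nat"
  assumes "j \<in> {1..I}"
  shows "total I (K(j := K j + m)) = total I K + m"
proof -
  have "total I (K(j := K j + m)) = (\<Sum>i=1..I. real ((K(j := K j + m)) i))"
    unfolding total_def by simp
  also have "\<dots> = (\<Sum>i=1..I. real (K i)) - real (K j) + real (K j + m)"
    using sum_upd[OF assms, of "\<lambda>i x. real x"] by simp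
  finally show ?thesis unfolding total_def by simp
qed

lemma S_upd:
  fixes j I m :: nat and K :: "nat \<Rightarrow> nat" and D :: "nat \<Rightarrow> real"
  assumes "j \<in> {1..I}"
  shows "(\<Sum>i=1..I. real ((K(j := K j + m)) i) / D i) = (\<Sum>i=1..I. real (K i) / D i) + m * (1 / D j)"
  using sum_upd[OF assms, of "\<lambda>i x. real x / D i" K "K j + m"] by (simp add: add_divide_distrib)

lemma eventually_neg:
  fixes e C B :: real
  assumes "e > 0"
  shows "\<exists>M::nat. \<forall>N::real. N \<ge> M \<longrightarrow> N \<ge> 1 \<longrightarrow> - e * N^2 + C * N + B < 0"
proof -
  define M :: nat where "M = nat (ceiling ((\<bar>C\<bar> + \<bar>B\<bar>) / e)) + 1"
  have M: "real M > (\<bar>C\<bar> + \<bar>B\<bar>) / e"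
    unfolding M_def by (smt (verit) of_nat_1 of_nat_add real_nat_ceiling_ge)
  show ?thesis
  proof (intro exI allI impI)
    fix N :: real assume N: "N \<ge> M" "N \<ge> 1"
    have "N > (\<bar>C\<bar> + \<bar>B\<bar>) / e" using M N by simp
    hence h: "e * N > \<bar>C\<bar> + \<bar>B\<bar>" using assms by (simp add: field_simps)
    have "C * N + B \<le> (\<bar>C\<bar> + \<bar>B\<bar>) * N"
    proof -
      have "C * N \<le> \<bar>C\<bar> * N" using N(2) by (intro mult_right_mono) auto
      moreover have "B \<le> \<bar>B\<bar> * N" using N(2)
        by (smt (verit) mult_left_mono mult.commute mult_cancel_left1 abs_ge_zero)
      ultimately show ?thesis by (simp add: distrib_right)
    qed
    also have "\<dots> < e * N * N" using h N(2) by (simp add: mult_strict_right_mono)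
    finally show "- e * N^2 + C * N + B < 0" by (simp add: power2_eq_square)
  qed
qed

lemma sign_help:
  fixes c F P :: real
  assumes "c > 0" "P > 0"
  shows "c * F / P > 0 \<longleftrightarrow> F > 0" "c * F / P < 0 \<longleftrightarrow> F < 0"
  using assms by (auto simp: zero_less_divide_iff zero_less_mult_iff divide_less_0_iff mult_less_0_iff)

lemma key_alg:
  fixes N c X a r :: real
  assumes "N > 0"
  shows "c / N^2 * X + (N - 1)/N * (c * r) - (c / (N+1)^2 * (X + a) + (N + 1 - 1)/(N+1) * (c * r))
     = c * (X * (2*N+1) - a * N^2 - r * N * (N+1)) / (N^2 * (N+1)^2)"
proof -
  have "N + 1 \<noteq> 0" using assms by simp
  then show ?thesis using assms
    by (simp add: divide_simps) (simp add: algebra_simps power2_eq_square)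
qed

theorem theorem2:
  fixes d :: nat and gsq ssq :: real and I j :: nat
    and D :: "nat \<Rightarrow> real" and K :: "nat \<Rightarrow> nat"
  assumes "d \<ge> 1" and "gsq > 0" and "ssq \<ge> 0"
    and "\<forall>i\<in>{1..I}. D i > 0"
    and "(\<Sum>i=1..I. K i) \<ge> 1"
    and "j \<in> {1..I}"
  defines "\<Delta> \<equiv> net_effect (real d) gsq ssq I D K j"
    and "\<eta> \<equiv> eta (real d) gsq ssq I D K"
    and "r \<equiv> ssq / (real d * gsq)"
  shows "(1 / D j < r \<and> 1 / D j \<le> \<eta> \<longrightarrow>
            \<Delta> 0 \<ge> 0 \<and> (\<exists>M. \<forall>m\<ge>M. \<Delta> m < 0))
       \<and> (r \<le> 1 / D j \<and> 1 / D j \<le> \<eta> \<longrightarrow> (\<forall>m. \<Delta> m \<ge> 0))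
       \<and> (\<eta> < 1 / D j \<and> 1 / D j \<le> r \<longrightarrow> (\<forall>m. \<Delta> m < 0))
       \<and> (max r \<eta> < 1 / D j \<longrightarrow>
            \<Delta> 0 < 0 \<and> (\<exists>M. \<forall>m\<ge>M. \<Delta> m > 0))"
proof -
  define c where "c = real d * gsq"
  have c: "c > 0" using assms(1,2) unfolding c_def by simp
  define T where "T = total I K"
  have T: "T \<ge> 1" using assms(5) unfolding T_def total_def by (simp add: of_nat_sum[symmetric] del: of_nat_sum)
  define S where "S = (\<Sum>i=1..I. real (K i) / D i)"
  define a where "a = 1 / D j"
  have a: "a > 0" using assms(4,6) unfolding a_def by simp
  define b where "b = S - a * T"
  define F where "F = (\<lambda>N::real. (a - r) * N^2 + (a + 2*b - r) * N + b)"
  have ssq: "ssq = c * r" unfolding r_def using c assms(1,2) unfolding c_def by simp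
  have Dm: "\<Delta> m = c * F (T + m) / ((T + m)^2 * (T + m + 1)^2)" for m
  proof -
    have t1: "total I (K(j := K j + m)) = T + m" using total_upd[OF assms(6)] T_def by simp
    have t2: "total I (K(j := K j + m + 1)) = T + m + 1" using total_upd[OF assms(6), of K "m+1"] T_def
      by (simp add: add.assoc)
    have s1: "(\<Sum>i=1..I. real ((K(j := K j + m)) i) / D i) = S + m * a"
      using S_upd[OF assms(6)] S_def a_def by simp
    have s2: "(\<Sum>i=1..I. real ((K(j := K j + m + 1)) i) / D i) = S + (m + 1) * a"
      using S_upd[OF assms(6), of K "m+1" D] S_def a_def by (simp add: add.assoc)
    have pos: "T + m > 0" using T by simp
    have "\<Delta> m = c / (T+m)^2 * (S + m*a) + (T + m - 1)/(T+m) * ssq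
               - (c / (T+m+1)^2 * (S + (m+1)*a) + (T + m + 1 - 1)/(T+m+1) * ssq)"
      unfolding \<Delta>_def net_effect_def gen_err_def t1 t2 s1 s2 c_def by simp
    also have "\<dots> = c * ((S + m*a) * (2*(T+m)+1) - a * (T+m)^2 - r * (T+m) * ((T+m)+1)) / ((T + m)^2 * (T + m + 1)^2)"
      unfolding ssq using key_alg[OF pos, where c=c and X="S + m*a" and a=a and r=r]
      by (simp add: add.assoc algebra_simps)
    also have "(S + m*a) * (2*(T+m)+1) - a * (T+m)^2 - r * (T+m) * ((T+m)+1) = F (T + m)"
      unfolding F_def b_def by (simp add: algebra_simps power2_eq_square)
    finally show ?thesis .
  qed
  have sgn: "\<Delta> m > 0 \<longleftrightarrow> F (T + m) > 0" "\<Delta> m < 0 \<longleftrightarrow> F (T + m) < 0"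
     "\<Delta> m \<ge> 0 \<longleftrightarrow> F (T + m) \<ge> 0" for m
  proof -
    have p: "(T + m)^2 * (T + m + 1)^2 > 0" using T by simp
    show 1: "\<Delta> m > 0 \<longleftrightarrow> F (T + m) > 0" 
      unfolding Dm using sign_help(1)[OF c p] .
    show 2: "\<Delta> m < 0 \<longleftrightarrow> F (T + m) < 0"
      unfolding Dm using sign_help(2)[OF c p] .
    show "\<Delta> m \<ge> 0 \<longleftrightarrow> F (T + m) \<ge> 0" using 2 by linarith
  qed
  have eta: "\<eta> - a = F T / T^2"
  proof -
    have "\<eta> = (2 * T + 1) * S / T^2 - (T + 1) * (c * r) / (c * T)"
      unfolding \<eta>_def eta_def S_def[symmetric] T_def[symmetric] c_def[symmetric] ssq[symmetric] ..
    also have "\<dots> = (2 * T + 1) * S / T^2 - (T + 1) * r / T" using c by simp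
    also have "\<dots> = a + F T / T^2" unfolding F_def b_def using T
      by (simp add: field_simps power2_eq_square)
    finally show ?thesis by simp
  qed
  have etaiff: "a \<le> \<eta> \<longleftrightarrow> F T \<ge> 0" "\<eta> < a \<longleftrightarrow> F T < 0"
  proof -
    have "T^2 > 0" using T by simp
    then show "a \<le> \<eta> \<longleftrightarrow> F T \<ge> 0" "\<eta> < a \<longleftrightarrow> F T < 0" using eta
      by (smt (verit) divide_nonneg_pos divide_neg_pos zero_less_divide_iff)+
  qed
  have ident: "T * F N - N * F T = (N - T) * ((a - r) * N * T - b)" for N
    unfolding F_def by (simp add: algebra_simps power2_eq_square)
  show ?thesis
    unfolding a_def[symmetric]
  proof (intro conjI impI)
    assume h: "a < r \<and> a \<le> \<eta>"
    show "\<Delta> 0 \<ge> 0" using sgn(3)[of 0] etaiff h by simp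
    obtain M :: nat where M: "\<forall>N::real. N \<ge> M \<longrightarrow> N \<ge> 1 \<longrightarrow> - (r - a) * N^2 + (a + 2*b - r) * N + b < 0"
      using eventually_neg[of "r - a" "a + 2*b - r" b] h by auto
    show "\<exists>M. \<forall>m\<ge>M. \<Delta> m < 0"
    proof (intro exI allI impI)
      fix m assume "m \<ge> M"
      hence "F (T + m) < 0" using M[rule_format, of "T + m"] T unfolding F_def by simp
      thus "\<Delta> m < 0" using sgn by simp
    qed
  next
    assume h: "r \<le> a \<and> a \<le> \<eta>"
    show "\<forall>m. \<Delta> m \<ge> 0"
    proof
      fix m
      let ?N = "T + real m"
      have "F ?N \<ge> 0"
      proof (cases "b \<le> 0")
        case True
        have "(a - r) * ?N * T \<ge> 0" using h T by simp
        hence "(a - r) * ?N * T - b \<ge> 0" using True by linarith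
        hence "T * F ?N - ?N * F T \<ge> 0" unfolding ident by (intro mult_nonneg_nonneg) simp_all
        moreover have "?N * F T \<ge> 0" using etaiff h T by simp
        ultimately have "T * F ?N \<ge> 0" by linarith
        thus ?thesis using T by (simp add: zero_le_mult_iff)
      next
        case False
        have "F ?N = (a - r) * (?N^2 + ?N) + b * (2 * ?N + 1)"
          unfolding F_def by (simp add: algebra_simps)
        moreover have "(a - r) * (?N^2 + ?N) \<ge> 0" using h T by simp
        moreover have "b * (2 * ?N + 1) \<ge> 0" using False T by simp
        ultimately show ?thesis by linarith
      qed
      thus "\<Delta> m \<ge> 0" using sgn by simp
    qed
  next
    assume h: "\<eta> < a \<and> a \<le> r"
    show "\<forall>m. \<Delta> m < 0"
    proof
      fix m
      let ?N = "T + real m"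
      have "F ?N < 0"
      proof (cases "b \<ge> 0")
        case True
        have "(a - r) * ?N * T \<le> 0" using h T by (simp add: mult_nonpos_nonneg)
        hence "(a - r) * ?N * T - b \<le> 0" using True by linarith
        hence "T * F ?N - ?N * F T \<le> 0" unfolding ident by (intro mult_nonneg_nonpos) simp_all
        moreover have "?N * F T < 0" using etaiff h T by (simp add: mult_pos_neg)
        ultimately have "T * F ?N < 0" by linarith
        thus ?thesis using T by (simp add: mult_less_0_iff)
      next
        case False
        have step: "F (x + 1) - F x = (a - r) * (2 * x + 2) + 2 * b" for x
          unfolding F_def by (simp add: algebra_simps power2_eq_square)
        have dec: "F (x + 1) < F x" if "x \<ge> 0" for x
        proof -
          have "(a - r) * (2 * x + 2) \<le> 0" using h that by (simp add: mult_nonpos_nonneg)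
          thus ?thesis using step[of x] False by linarith
        qed
        have "F (T + real k) < 0" for k
        proof (induction k)
          case 0 then show ?case using etaiff h by simp
        next
          case (Suc k)
          have "F (T + real k + 1) < F (T + real k)" using dec[of "T + real k"] T by simp
          moreover have "T + real (Suc k) = T + real k + 1" by simp
          ultimately show ?case using Suc by (metis order.strict_trans)
        qed
        thus ?thesis by simp
      qed
      thus "\<Delta> m < 0" using sgn by simp
    qed
  next
    assume h: "max r \<eta> < a"
    show "\<Delta> 0 < 0" using sgn(2)[of 0] etaiff h by simp
    obtain M :: nat where M: "\<forall>N::real. N \<ge> M \<longrightarrow> N \<ge> 1 \<longrightarrow> - (a - r) * N^2 + (- (a + 2*b - r)) * N + (- b) < 0"
      using eventually_neg[of "a - r" "- (a + 2*b - r)" "- b"] h by auto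
    show "\<exists>M. \<forall>m\<ge>M. \<Delta> m > 0"
    proof (intro exI allI impI)
      fix m assume "m \<ge> M"
      hence "- (a - r) * (T+m)^2 + (- (a + 2*b - r)) * (T+m) + (- b) < 0"
        using M[rule_format, of "T + m"] T by simp
      hence "F (T + m) > 0" unfolding F_def by argo
      thus "\<Delta> m > 0" using sgn by simp
    qed
  qed
qed

end
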